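(* Let $k\ge 1$ and let $R$ be a finite abelian group of cardinality $r$. There exists a constant $c_1=c_1(r,k)$ such that for any $n \geq 10k^2$, any $m \geq \frac{n}{2k}$, and any $\theta$ with $\frac{1}{2k}\le\theta\le 1$, $$g_n(m,\theta) \leq \Big( c_1 \cdot n^{(k-1)\left(1-\theta\left(1-\frac{1}{2k^2}\right)\right)} \Big)^m.$$
   Context: $\Delta_{n-1}$ is the simplex on vertex set $[n]$; $\Delta_{n-1}(j)$ denotes its set of $j$-dimensional faces. For $j\ge 0$, $C^j(\Delta_{n-1})$ is the group of $R$-valued skew-symmetric functions on ordered $j$-simplices, with coboundary $d_j\phi([v_0,\dots,v_{j+1}])=\sum_{i=0}^{j+1}(-1)^i\phi([v_0,\dots,\widehat{v_i},\dots,v_{j+1}])$; in addition $C^{-1}=R$ with $d_{-1}a(v)=a$. For $\phi\in C^{k-1}(\Delta_{n-1})$: $\mathrm{supp}(\phi)=\{\sigma\in\Delta_{n-1}(k-1):\phi(\sigma)\ne 0\}$ (a family of $k$-subsets of $[n]$); $b(\phi)=|\{\tau\in\Delta_{n-1}(k): d_{k-1}\phi(\tau)\neq 0\}|$; $w(\phi)=\min\{|\mathrm{supp}(\phi+d_{k-2}\psi)|:\psi\in C^{k-2}(\Delta_{n-1})\}$. A family $\mathcal{F}\subset\binom{[n]}{k}$ is connected if any two members are joined by a sequence in $\mathcal{F}$ whose consecutive members share exactly $k-1$ elements. $\mathcal{G}_n=\{0\ne\phi\in C^{k-1}(\Delta_{n-1}): \mathrm{supp}(\phi)\text{ connected},\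 w(\phi)=|\mathrm{supp}(\phi)|\}$, and $g_n(m,\theta)$ is the number of $\phi\in\mathcal{G}_n$ with $|\mathrm{supp}(\phi)|=m$ and $b(\phi)=(1-\theta)mn$. *)

theory Defs
  imports Complex_Main
begin

text \<open>Ordered simplices of the simplex on vertex set [n] = {1..n}, indexed by the
  number q of vertices (q = j+1 for a j-simplex). For q = 0 the only such list is [],
  so cochains with q = 0 are exactly the elements of R, i.e. C^{-1} = R.\<close>

definition simplex_lists :: "nat \<Rightarrow> nat \<Rightarrow> nat list set" where
  "simplex_lists n q = {xs. length xs = q \<and> distinct xs \<and> set xs \<subseteq> {1..n}}"

definition swap_adj :: "nat \<Rightarrow> 'a list \<Rightarrow> 'a list" where
  "swap_adj i xs = xs[i := xs ! Suc i, Suc i := xs ! i]"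

text \<open>C^{q-1}: skew-symmetric R-valued functions on ordered (q-1)-simplices
  (extended by 0 outside). Skew-symmetry: swapping two adjacent vertices negates the
  value (adjacent transpositions generate all permutations).\<close>

definition cochains :: "nat \<Rightarrow> nat \<Rightarrow> (nat list \<Rightarrow> 'r::ab_group_add) set" where
  "cochains n q = {\<phi>. (\<forall>xs. xs \<notin> simplex_lists n q \<longrightarrow> \<phi> xs = 0) \<and>
      (\<forall>xs \<in> simplex_lists n q. \<forall>i. Suc i < q \<longrightarrow> \<phi> (swap_adj i xs) = - \<phi> xs)}"

definition del_nth :: "nat \<Rightarrow> 'a list \<Rightarrow> 'a list" where
  "del_nth i xs = take i xs @ drop (Suc i) xs"

definition cobound :: "nat \<Rightarrow> nat \<Rightarrow> (nat list \<Rightarrow> 'r::ab_group_add) \<Rightarrow> nat list \<Rightarrow> 'r" where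
  "cobound n q \<phi> = (\<lambda>xs. if xs \<in> simplex_lists n (Suc q)
      then (\<Sum>i<Suc q. (if even i then \<phi> (del_nth i xs) else - \<phi> (del_nth i xs)))
      else 0)"

definition csupp :: "nat \<Rightarrow> nat \<Rightarrow> (nat list \<Rightarrow> 'r::ab_group_add) \<Rightarrow> nat set set" where
  "csupp n q \<phi> = {set xs | xs. xs \<in> simplex_lists n q \<and> \<phi> xs \<noteq> 0}"

definition cbnd :: "nat \<Rightarrow> nat \<Rightarrow> (nat list \<Rightarrow> 'r::ab_group_add) \<Rightarrow> nat" where
  "cbnd n q \<phi> = card {set xs | xs. xs \<in> simplex_lists n (Suc q) \<and> cobound n q \<phi> xs \<noteq> 0}"

definition cweight :: "nat \<Rightarrow> nat \<Rightarrow> (nat list \<Rightarrow> 'r::ab_group_add) \<Rightarrow> nat" where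
  "cweight n q \<phi> = Inf {card (csupp n q (\<lambda>xs. \<phi> xs + cobound n (q - 1) \<psi> xs)) | \<psi>.
      \<psi> \<in> (cochains n (q - 1) :: (nat list \<Rightarrow> 'r) set)}"

definition family_connected :: "nat \<Rightarrow> nat set set \<Rightarrow> bool" where
  "family_connected k F = (\<forall>A\<in>F. \<forall>B\<in>F. \<exists>ps. ps \<noteq> [] \<and> hd ps = A \<and> last ps = B \<and>
      set ps \<subseteq> F \<and> (\<forall>i. Suc i < length ps \<longrightarrow> card (ps ! i \<inter> ps ! Suc i) = k - 1))"

definition Gset :: "nat \<Rightarrow> nat \<Rightarrow> (nat list \<Rightarrow> 'r::ab_group_add) set" where
  "Gset n k = {\<phi>. \<phi> \<in> cochains n k \<and> \<phi> \<noteq> (\<lambda>_. 0) \<and> family_connected k (csupp n k \<phi>)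
      \<and> cweight n k \<phi> = card (csupp n k \<phi>)}"

definition gcount :: "'r::ab_group_add itself \<Rightarrow> nat \<Rightarrow> nat \<Rightarrow> nat \<Rightarrow> real \<Rightarrow> nat" where
  "gcount _ n k m \<theta> = card {\<phi> \<in> (Gset n k :: (nat list \<Rightarrow> 'r) set).
      card (csupp n k \<phi>) = m \<and> real (cbnd n k \<phi>) = (1 - \<theta>) * real m * real n}"

end

theory Submission
  imports Defs "HOL-Library.FuncSet"
begin

lemma pow_div_fact_le_exp:
  fixes x :: real assumes "0 \<le> x" shows "x ^ j / fact j \<le> exp x"
proof -
  have s: "summable (\<lambda>n. x ^ n / fact n)" using summable_exp[of x]
    by (simp add: divide_inverse mult.commute)
  have "sum (\<lambda>n. x ^ n / fact n) {j} \<le> suminf (\<lambda>n. x ^ n / fact n)"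
    by (rule sum_le_suminf[OF s]) (use assms in auto)
  also have "\<dots> = exp x" by (simp add: exp_def divide_inverse mult.commute scaleR_conv_of_real)
  finally show ?thesis by simp
qed

lemma del_nth_last: "length ys = k \<Longrightarrow> del_nth k (ys @ [v]) = ys"
  by (simp add: del_nth_def)

lemma del_nth_mem: "i < length ys \<Longrightarrow> v \<in> set (del_nth i (ys @ [v]))"
  by (simp add: del_nth_def)

lemma del_nth_simplex:
  assumes "xs \<in> simplex_lists n (Suc q)" "i < Suc q"
  shows "del_nth i xs \<in> simplex_lists n q" "set (del_nth i xs) \<subseteq> set xs"
proof -
  have d: "distinct xs" and l: "length xs = Suc q" and s: "set xs \<subseteq> {1..n}"
    using assms by (auto simp: simplex_lists_def)
  have sub: "set (del_nth i xs) \<subseteq> set xs" unfolding del_nth_def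
    by (auto dest: in_set_takeD in_set_dropD)
  have "distinct (take i xs @ drop (Suc i) xs)"
    using d by (auto simp: set_take_disj_set_drop_if_distinct distinct_take distinct_drop
       dest: in_set_dropD intro: set_take_disj_set_drop_if_distinct[of xs i "Suc i"])
  then show "del_nth i xs \<in> simplex_lists n q"
    using l s sub assms(2) by (auto simp: simplex_lists_def del_nth_def)
  show "set (del_nth i xs) \<subseteq> set xs" by (rule sub)
qed

lemma cob_nonzero:
  fixes \<phi> :: "nat list \<Rightarrow> 'r::ab_group_add"
  assumes ys: "ys \<in> simplex_lists n k" and nz: "\<phi> ys \<noteq> 0" and v: "v \<in> {1..n}" "v \<notin> set ys"
    and uniq: "\<forall>zs \<in> simplex_lists n k. \<phi> zs \<noteq> 0 \<longrightarrow> set zs \<subseteq> insert v (set ys) \<longrightarrow> set zs = set ys"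
  shows "ys @ [v] \<in> simplex_lists n (Suc k)" "cobound n k \<phi> (ys @ [v]) \<noteq> 0"
proof -
  have l: "length ys = k" using ys by (simp add: simplex_lists_def)
  show xs: "ys @ [v] \<in> simplex_lists n (Suc k)" using ys v by (auto simp: simplex_lists_def)
  have z: "\<phi> (del_nth i (ys @ [v])) = 0" if "i < k" for i
  proof (rule ccontr)
    assume a: "\<phi> (del_nth i (ys @ [v])) \<noteq> 0"
    have "del_nth i (ys @ [v]) \<in> simplex_lists n k" "set (del_nth i (ys @ [v])) \<subseteq> set (ys @ [v])"
      using del_nth_simplex[OF xs, of i] that by auto
    with uniq a have "set (del_nth i (ys @ [v])) = set ys" by auto
    moreover have "v \<in> set (del_nth i (ys @ [v]))" using del_nth_mem[of i ys v] l that by simp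
    ultimately show False using v by simp
  qed
  have "cobound n k \<phi> (ys @ [v]) = (\<Sum>i<Suc k. (if even i then \<phi> (del_nth i (ys @ [v])) else - \<phi> (del_nth i (ys @ [v]))))"
    using xs by (simp add: cobound_def)
  also have "\<dots> = (if even k then \<phi> ys else - \<phi> ys)"
    using z by (simp add: del_nth_last[OF l] sum.neutral)
  finally show "cobound n k \<phi> (ys @ [v]) \<noteq> 0" using nz by simp
qed

definition KS :: "nat \<Rightarrow> nat \<Rightarrow> nat set set" where
  "KS n j = {A. A \<subseteq> {1..n} \<and> card A = j}"
definition sdeg :: "nat set set \<Rightarrow> nat set \<Rightarrow> nat" where
  "sdeg F B = card {\<sigma>\<in>F. B \<subseteq> \<sigma>}"
definition heavy :: "nat \<Rightarrow> nat \<Rightarrow> real \<Rightarrow> nat set set \<Rightarrow> nat set set" where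
  "heavy n k t F = {B \<in> KS n (k-1). t \<le> real (sdeg F B)}"
definition cand :: "nat \<Rightarrow> nat \<Rightarrow> nat set set \<Rightarrow> nat set set" where
  "cand n k Hs = {\<sigma> \<in> KS n k. \<exists>B\<in>Hs. B \<subseteq> \<sigma>}"
definition good :: "nat \<Rightarrow> nat set set \<Rightarrow> nat set \<Rightarrow> nat set" where
  "good n F \<sigma> = {v \<in> {1..n}. v \<notin> \<sigma> \<and> (\<forall>\<sigma>'\<in>F. \<sigma>' \<subseteq> insert v \<sigma> \<longrightarrow> \<sigma>' = \<sigma>)}"

lemma finite_KS: "finite (KS n j)"
  by (rule finite_subset[of _ "Pow {1..n}"]) (auto simp: KS_def)

lemma card_KS: "card (KS n j) = n choose j"
  using n_subsets[of "{1..n}" j] by (simp add: KS_def)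

lemma KS_finite_mem: "A \<in> KS n j \<Longrightarrow> finite A"
  unfolding KS_def using finite_subset[of A "{1..n}"] by auto

lemma csupp_KS: "csupp n k \<phi> \<subseteq> KS n k"
proof
  fix A assume "A \<in> csupp n k \<phi>"
  then obtain xs where "xs \<in> simplex_lists n k" "A = set xs" unfolding csupp_def by blast
  then show "A \<in> KS n k" unfolding KS_def simplex_lists_def using distinct_card[of xs] by auto
qed

lemma finite_csupp: "finite (csupp n k \<phi>)"
  by (rule finite_subset[OF csupp_KS finite_KS])

lemma light_to_cbnd:
  fixes \<phi> :: "nat list \<Rightarrow> 'r::ab_group_add"
  assumes FL: "FL \<subseteq> csupp n k \<phi>"
  shows "card (Sigma FL (good n (csupp n k \<phi>))) \<le> cbnd n k \<phi>"
proof -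
  let ?F = "csupp n k \<phi>"
  let ?T = "{set xs | xs. xs \<in> simplex_lists n (Suc k) \<and> cobound n k \<phi> xs \<noteq> 0}"
  have finT: "finite ?T"
    by (rule finite_subset[of _ "Pow {1..n}"]) (auto simp: simplex_lists_def)
  have inj: "inj_on (\<lambda>(\<sigma>,v). insert v \<sigma>) (Sigma FL (good n ?F))"
  proof (rule inj_onI, clarify)
    fix \<sigma> v \<sigma>' v'
    assume a: "\<sigma> \<in> FL" "v \<in> good n ?F \<sigma>" "\<sigma>' \<in> FL" "v' \<in> good n ?F \<sigma>'" "insert v \<sigma> = insert v' \<sigma>'"
    have "\<sigma>' \<subseteq> insert v \<sigma>" using a(5) by auto
    with a(1-3) FL have e: "\<sigma>' = \<sigma>" by (auto simp: good_def)
    with a show "\<sigma> = \<sigma>' \<and> v = v'" by (auto simp: good_def)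
  qed
  have sub: "(\<lambda>(\<sigma>,v). insert v \<sigma>) ` (Sigma FL (good n ?F)) \<subseteq> ?T"
  proof (rule image_subsetI)
    fix p assume "p \<in> Sigma FL (good n ?F)"
    then obtain \<sigma> v where p: "p = (\<sigma>, v)" and a: "\<sigma> \<in> FL" "v \<in> good n ?F \<sigma>" by auto
    from a obtain ys where ys: "ys \<in> simplex_lists n k" "\<phi> ys \<noteq> 0" "set ys = \<sigma>"
      using FL by (auto simp: csupp_def)
    have uniq: "\<forall>zs \<in> simplex_lists n k. \<phi> zs \<noteq> 0 \<longrightarrow> set zs \<subseteq> insert v (set ys) \<longrightarrow> set zs = set ys"
    proof clarify
      fix zs assume "zs \<in> simplex_lists n k" "\<phi> zs \<noteq> 0" "set zs \<subseteq> insert v (set ys)"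
      then show "set zs = set ys" using a(2) ys(3) by (auto simp: good_def csupp_def)
    qed
    have v: "v \<in> {1..n}" "v \<notin> set ys" using a(2) ys(3) by (auto simp: good_def)
    note c = cob_nonzero[OF ys(1) ys(2) v uniq]
    have "insert v \<sigma> = set (ys @ [v])" using ys(3) by auto
    then have "insert v \<sigma> \<in> ?T" using c by blast
    then show "(\<lambda>(\<sigma>,v). insert v \<sigma>) p \<in> ?T" using p by simp
  qed
  have "card (Sigma FL (good n ?F)) = card ((\<lambda>(\<sigma>,v). insert v \<sigma>) ` (Sigma FL (good n ?F)))"
    using card_image[OF inj] by simp
  also have "\<dots> \<le> card ?T" by (rule card_mono[OF finT sub])
  finally show ?thesis by (simp add: cbnd_def)
qed

lemma card_sub_km1:
  assumes "finite \<sigma>" "card \<sigma> = k" "k \<ge> 1"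
  shows "card {B. B \<subseteq> \<sigma> \<and> card B = k - 1} = k"
proof -
  have "card {B. B \<subseteq> \<sigma> \<and> card B = k - 1} = k choose (k - 1)"
    using n_subsets[OF assms(1)] assms(2) by simp
  also have "\<dots> = k" using assms(3) binomial_symmetric[of 1 k] by simp
  finally show ?thesis .
qed

lemma light_good:
  assumes F: "F \<subseteq> KS n k" and s: "\<sigma> \<in> F" and k: "k \<ge> 1" and t: "0 \<le> t"
    and light: "\<forall>B. B \<subseteq> \<sigma> \<longrightarrow> card B = k - 1 \<longrightarrow> real (sdeg F B) < t"
  shows "real n \<le> real (card (good n F \<sigma>)) + k + k * t"
proof -
  have finF: "finite F" by (rule finite_subset[OF F finite_KS])
  have fs: "finite \<sigma>" "card \<sigma> = k" "\<sigma> \<subseteq> {1..n}" using s F KS_finite_mem[of \<sigma> n k] by (auto simp: KS_def)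
  define sub where "sub = {B. B \<subseteq> \<sigma> \<and> card B = k - 1}"
  define Lk where "Lk B = {v. insert v B \<in> F \<and> v \<notin> B}" for B
  have cs: "card sub = k" using card_sub_km1[OF fs(1,2) k] by (simp add: sub_def)
  have fsub: "finite sub" using fs(1) by (simp add: sub_def)
  have Lk_le: "card (Lk B) \<le> sdeg F B" if "B \<in> sub" for B
  proof -
    have "inj_on (\<lambda>v. insert v B) (Lk B)" by (rule inj_onI) (auto simp: Lk_def)
    moreover have "(\<lambda>v. insert v B) ` Lk B \<subseteq> {\<sigma>\<in>F. B \<subseteq> \<sigma>}" by (auto simp: Lk_def)
    moreover have "finite {\<sigma>\<in>F. B \<subseteq> \<sigma>}" using finF by simp
    ultimately have "card ((\<lambda>v. insert v B) ` Lk B) \<le> card {\<sigma>\<in>F. B \<subseteq> \<sigma>}"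
      by (intro card_mono) 
    then show ?thesis unfolding sdeg_def using card_image[OF \<open>inj_on _ _\<close>] by simp
  qed
  have cover: "{1..n} \<subseteq> good n F \<sigma> \<union> \<sigma> \<union> (\<Union>B\<in>sub. Lk B)"
  proof
    fix v assume v: "v \<in> {1..n}"
    show "v \<in> good n F \<sigma> \<union> \<sigma> \<union> (\<Union>B\<in>sub. Lk B)"
    proof (cases "v \<in> good n F \<sigma> \<or> v \<in> \<sigma>")
      case True then show ?thesis by blast
    next
      case False
      then obtain \<sigma>' where s': "\<sigma>' \<in> F" "\<sigma>' \<subseteq> insert v \<sigma>" "\<sigma>' \<noteq> \<sigma>" and vs: "v \<notin> \<sigma>"
        using v by (auto simp: good_def)
      have c': "card \<sigma>' = k" "finite \<sigma>'" using s'(1) F KS_finite_mem[of \<sigma>' n k] by (auto simp: KS_def)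
      have vin: "v \<in> \<sigma>'"
      proof (rule ccontr)
        assume "v \<notin> \<sigma>'"
        then have "\<sigma>' \<subseteq> \<sigma>" using s'(2) by auto
        then have "\<sigma>' = \<sigma>" using card_subset_eq[OF fs(1), of \<sigma>'] c' fs(2) by simp
        with s'(3) show False by simp
      qed
      define B where "B = \<sigma>' - {v}"
      have "B \<subseteq> \<sigma>" using s'(2) by (auto simp: B_def)
      moreover have "card B = k - 1" using c' vin by (simp add: B_def)
      moreover have "insert v B \<in> F" "v \<notin> B" using vin s'(1) by (auto simp: B_def insert_absorb)
      ultimately have "v \<in> Lk B" "B \<in> sub" by (auto simp: Lk_def sub_def)
      then show ?thesis by blast
    qed
  qed
  have "n = card {1..n}" by simp
  also have "\<dots> \<le> card (good n F \<sigma> \<union> \<sigma> \<union> (\<Union>B\<in>sub. Lk B))"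
  proof (rule card_mono[OF _ cover])
    have "good n F \<sigma> \<subseteq> {1..n}" by (auto simp: good_def)
    then have "finite (good n F \<sigma>)" by (rule finite_subset) simp
    moreover have "finite (Lk B)" for B
    proof -
      have "Lk B \<subseteq> \<Union>F" by (auto simp: Lk_def)
      moreover have "finite (\<Union>F)"
        using finF F KS_finite_mem[of _ n k] by (intro finite_Union) auto
      ultimately show ?thesis by (rule finite_subset)
    qed
    ultimately show "finite (good n F \<sigma> \<union> \<sigma> \<union> (\<Union>B\<in>sub. Lk B))" using fs(1) fsub by simp
  qed
  also have "\<dots> \<le> card (good n F \<sigma>) + card \<sigma> + card (\<Union>B\<in>sub. Lk B)"
    using card_Un_le[of "good n F \<sigma> \<union> \<sigma>" "\<Union>B\<in>sub. Lk B"] card_Un_le[of "good n F \<sigma>" \<sigma>] by linarith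
  also have "card (\<Union>B\<in>sub. Lk B) \<le> (\<Sum>B\<in>sub. card (Lk B))" by (rule card_UN_le[OF fsub])
  finally have 1: "real n \<le> real (card (good n F \<sigma>)) + k + (\<Sum>B\<in>sub. real (card (Lk B)))"
    using fs(2) by (simp add: of_nat_sum[symmetric] del: of_nat_sum) 
  have "(\<Sum>B\<in>sub. real (card (Lk B))) \<le> (\<Sum>B\<in>sub. t)"
  proof (rule sum_mono)
    fix B assume B: "B \<in> sub"
    have "real (card (Lk B)) \<le> real (sdeg F B)" using Lk_le[OF B] by simp
    also have "\<dots> < t" using light B by (auto simp: sub_def)
    finally show "real (card (Lk B)) \<le> t" by simp
  qed
  also have "\<dots> = k * t" using cs by simp
  finally show ?thesis using 1 by simp
qed

lemma heavy_count:
  assumes F: "F \<subseteq> KS n k" and k: "k \<ge> 1" and t: "0 \<le> t"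
  shows "real (card (heavy n k t F)) * t \<le> real (k * card F)"
proof -
  let ?H = "heavy n k t F"
  have finF: "finite F" by (rule finite_subset[OF F finite_KS])
  have finH: "finite ?H" by (rule finite_subset[OF _ finite_KS[of n "k-1"]]) (auto simp: heavy_def)
  have "real (card ?H) * t = (\<Sum>B\<in>?H. t)" by simp
  also have "\<dots> \<le> (\<Sum>B\<in>?H. real (sdeg F B))" by (rule sum_mono) (auto simp: heavy_def)
  also have "\<dots> = real (\<Sum>B\<in>?H. card {\<sigma>\<in>F. B \<subseteq> \<sigma>})" by (simp add: sdeg_def)
  also have "(\<Sum>B\<in>?H. card {\<sigma>\<in>F. B \<subseteq> \<sigma>}) = card (Sigma ?H (\<lambda>B. {\<sigma>\<in>F. B \<subseteq> \<sigma>}))"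
    using finH finF by (simp add: card_SigmaI)
  also have "\<dots> \<le> card (Sigma F (\<lambda>\<sigma>. {B. B \<subseteq> \<sigma> \<and> card B = k - 1}))"
  proof -
    have inj: "inj_on (\<lambda>(B,\<sigma>). (\<sigma>,B)) (Sigma ?H (\<lambda>B. {\<sigma>\<in>F. B \<subseteq> \<sigma>}))"
      by (rule inj_onI) auto
    have sub: "(\<lambda>(B,\<sigma>). (\<sigma>,B)) ` (Sigma ?H (\<lambda>B. {\<sigma>\<in>F. B \<subseteq> \<sigma>})) \<subseteq> Sigma F (\<lambda>\<sigma>. {B. B \<subseteq> \<sigma> \<and> card B = k - 1})"
      by (auto simp: heavy_def KS_def)
    have fin: "finite (Sigma F (\<lambda>\<sigma>. {B. B \<subseteq> \<sigma> \<and> card B = k - 1}))"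
      using finF F KS_finite_mem by (intro finite_SigmaI) auto
    show ?thesis using card_mono[OF fin sub] card_image[OF inj] by simp
  qed
  also have "\<dots> = (\<Sum>\<sigma>\<in>F. card {B. B \<subseteq> \<sigma> \<and> card B = k - 1})"
    using finF F KS_finite_mem by (subst card_SigmaI) auto
  also have "\<dots> = (\<Sum>\<sigma>\<in>F. k)"
  proof (rule sum.cong[OF refl])
    fix \<sigma> assume "\<sigma> \<in> F"
    then have "finite \<sigma>" "card \<sigma> = k" using F KS_finite_mem[of \<sigma> n k] by (auto simp: KS_def)
    then show "card {B. B \<subseteq> \<sigma> \<and> card B = k - 1} = k" using card_sub_km1 k by blast
  qed
  also have "\<dots> = k * card F" by simp
  finally show ?thesis by simp
qed

lemma cand_card:
  assumes Hs: "Hs \<subseteq> KS n (k - 1)" and k: "k \<ge> 1"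
  shows "card (cand n k Hs) \<le> card Hs * n"
proof -
  have finHs: "finite Hs" by (rule finite_subset[OF Hs finite_KS])
  have sub: "cand n k Hs \<subseteq> (\<lambda>(B,v). insert v B) ` (Hs \<times> {1..n})"
  proof
    fix \<sigma> assume "\<sigma> \<in> cand n k Hs"
    then obtain B where s: "\<sigma> \<in> KS n k" and B: "B \<in> Hs" "B \<subseteq> \<sigma>" unfolding cand_def by blast
    have fs: "finite \<sigma>" "card \<sigma> = k" "\<sigma> \<subseteq> {1..n}" using s KS_finite_mem[OF s] by (auto simp: KS_def)
    have cB: "card B = k - 1" using B Hs by (auto simp: KS_def)
    have "card (\<sigma> - B) = 1" using card_Diff_subset[OF finite_subset[OF B(2) fs(1)] B(2)] fs cB k by simp
    then obtain v where v: "\<sigma> - B = {v}" by (auto simp: card_Suc_eq)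
    then have "\<sigma> = insert v B" "v \<in> {1..n}" using B(2) fs(3) by auto
    then show "\<sigma> \<in> (\<lambda>(B,v). insert v B) ` (Hs \<times> {1..n})" using B(1) by force
  qed
  have "card (cand n k Hs) \<le> card ((\<lambda>(B,v). insert v B) ` (Hs \<times> {1..n}))"
    by (rule card_mono[OF _ sub]) (simp add: finHs)
  also have "\<dots> \<le> card (Hs \<times> {1..n})" by (rule card_image_le) (simp add: finHs)
  also have "\<dots> = card Hs * n" by (simp add: card_cartesian_product)
  finally show ?thesis .
qed

definition XL :: "nat \<Rightarrow> nat set set \<Rightarrow> nat list set" where
  "XL k F = (\<Union>A\<in>F. {xs. set xs \<subseteq> A \<and> length xs = k})"

lemma XL_finite: "finite F \<Longrightarrow> (\<forall>A\<in>F. finite A) \<Longrightarrow> finite (XL k F)"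
  unfolding XL_def by (auto intro!: finite_lists_length_eq)

lemma XL_card:
  assumes "finite F" "\<forall>A\<in>F. finite A \<and> card A = k"
  shows "card (XL k F) \<le> card F * k ^ k"
proof -
  have "card (XL k F) \<le> (\<Sum>A\<in>F. card {xs. set xs \<subseteq> A \<and> length xs = k})"
    unfolding XL_def by (rule card_UN_le[OF assms(1)])
  also have "\<dots> = (\<Sum>A\<in>F. k ^ k)"
    using assms by (intro sum.cong refl) (simp add: card_lists_length_eq)
  finally show ?thesis by simp
qed

lemma phi_count:
  fixes S :: "(nat list \<Rightarrow> 'r::{finite,ab_group_add}) set"
  assumes fin: "finite FF" and FF: "\<forall>F\<in>FF. F \<subseteq> KS n k \<and> card F = m"
    and SS: "S \<subseteq> {\<phi>. \<phi> \<in> cochains n k \<and> csupp n k \<phi> \<in> FF}"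
  shows "card S \<le> card FF * card (UNIV :: 'r set) ^ (m * k ^ k)"
proof -
  let ?S = "{\<phi> :: nat list \<Rightarrow> 'r. \<phi> \<in> cochains n k \<and> csupp n k \<phi> \<in> FF}"
  let ?T = "Sigma FF (\<lambda>F. XL k F \<rightarrow>\<^sub>E (UNIV :: 'r set))"
  let ?f = "\<lambda>\<phi>::nat list \<Rightarrow> 'r. (csupp n k \<phi>, restrict \<phi> (XL k (csupp n k \<phi>)))"
  have FK0: "F \<subseteq> KS n k" if "F \<in> FF" for F using FF that by simp
  have finA: "\<forall>A\<in>F. finite A" if "F \<in> FF" for F using FK0[OF that] KS_finite_mem by auto
  have finX: "finite (XL k F)" if "F \<in> FF" for F
    by (rule XL_finite[OF finite_subset[OF FK0[OF that] finite_KS] finA[OF that]])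
  have zero: "\<phi> xs = 0" if "\<phi> \<in> cochains n k" "xs \<notin> XL k (csupp n k \<phi>)" for \<phi> :: "nat list \<Rightarrow> 'r" and xs
  proof (rule ccontr)
    assume nz: "\<phi> xs \<noteq> 0"
    then have xs: "xs \<in> simplex_lists n k" using that(1) by (auto simp: cochains_def)
    then have "set xs \<in> csupp n k \<phi>" using nz by (auto simp: csupp_def)
    moreover have "length xs = k" using xs by (simp add: simplex_lists_def)
    ultimately have "xs \<in> XL k (csupp n k \<phi>)" unfolding XL_def by blast
    with that(2) show False by simp
  qed
  have inj: "inj_on ?f ?S"
  proof (rule inj_onI)
    fix \<phi> \<psi> assume a: "\<phi> \<in> ?S" "\<psi> \<in> ?S" "?f \<phi> = ?f \<psi>"
    from a(3) have cc: "csupp n k \<phi> = csupp n k \<psi> \<and> restrict \<phi> (XL k (csupp n k \<phi>)) = restrict \<psi> (XL k (csupp n k \<psi>))"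
      by (rule iffD1[OF prod.inject])
    from cc have cs: "csupp n k \<phi> = csupp n k \<psi>" by (rule conjunct1)
    from cc have r0: "restrict \<phi> (XL k (csupp n k \<phi>)) = restrict \<psi> (XL k (csupp n k \<psi>))" by (rule conjunct2)
    from r0 cs have r: "restrict \<phi> (XL k (csupp n k \<phi>)) = restrict \<psi> (XL k (csupp n k \<phi>))" by simp
    have c1: "\<phi> \<in> cochains n k" "\<psi> \<in> cochains n k" using a(1,2) by simp_all
    show "\<phi> = \<psi>"
    proof
      fix xs show "\<phi> xs = \<psi> xs"
      proof (cases "xs \<in> XL k (csupp n k \<phi>)")
        case True then show ?thesis using fun_cong[OF r, of xs] by simp
      next
        case False then show ?thesis using zero[OF c1(1) False] zero[of \<psi> xs] c1(2) cs by simp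
      qed
    qed
  qed
  have sub: "?f ` ?S \<subseteq> ?T"
  proof (rule image_subsetI)
    fix \<phi> assume "\<phi> \<in> ?S"
    then have "csupp n k \<phi> \<in> FF" by simp
    moreover have "restrict \<phi> (XL k (csupp n k \<phi>)) \<in> XL k (csupp n k \<phi>) \<rightarrow>\<^sub>E (UNIV :: 'r set)"
      by (simp add: restrict_PiE_iff)
    ultimately show "?f \<phi> \<in> ?T" by simp
  qed
  have finP: "finite (XL k F \<rightarrow>\<^sub>E (UNIV :: 'r set))" if "F \<in> FF" for F
      by (rule finite_PiE[OF finX[OF that]]) simp
  have finT: "finite ?T" by (rule finite_SigmaI[OF fin finP])
  have injS: "inj_on ?f S" by (rule inj_on_subset[OF inj SS])
  have subS: "?f ` S \<subseteq> ?T" using sub SS by blast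
  have "card S = card (?f ` S)" by (rule card_image[OF injS, symmetric])
  also have "\<dots> \<le> card ?T" by (rule card_mono[OF finT subS])
  also have "card ?T = (\<Sum>F\<in>FF. card (XL k F \<rightarrow>\<^sub>E (UNIV :: 'r set)))"
    by (rule card_SigmaI[OF fin]) (use finP in blast)
  also have "\<dots> = (\<Sum>F\<in>FF. card (UNIV :: 'r set) ^ card (XL k F))"
  proof (rule sum.cong[OF refl])
    fix F assume "F \<in> FF"
    show "card (XL k F \<rightarrow>\<^sub>E (UNIV :: 'r set)) = card (UNIV :: 'r set) ^ card (XL k F)"
      by (simp only: card_PiE[OF finX[OF \<open>F \<in> FF\<close>]] prod_constant)
  qed
  also have "\<dots> \<le> (\<Sum>F\<in>FF. card (UNIV :: 'r set) ^ (m * k ^ k))"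
  proof (rule sum_mono)
    fix F assume F: "F \<in> FF"
    have FK: "F \<subseteq> KS n k" by (rule FK0[OF F])
    have "finite F" by (rule finite_subset[OF FK finite_KS])
    moreover have "\<forall>A\<in>F. finite A \<and> card A = k"
    proof
      fix A assume "A \<in> F"
      then have AK: "A \<in> KS n k" using FK by (rule subsetD[rotated])
      show "finite A \<and> card A = k" using KS_finite_mem[OF AK] AK unfolding KS_def by simp
    qed
    ultimately have "card (XL k F) \<le> card F * k ^ k" by (rule XL_card)
    also have "card F = m" using F FF by simp
    finally have "card (XL k F) \<le> m * k ^ k" .
    then show "card (UNIV :: 'r set) ^ card (XL k F) \<le> card (UNIV :: 'r set) ^ (m * k ^ k)"
      by (rule power_increasing) (simp add: Suc_le_eq card_gt_0_iff)
  qed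
  also have "\<dots> = card FF * card (UNIV :: 'r set) ^ (m * k ^ k)" by simp
  finally show ?thesis .
qed

lemma choose_bound:
  assumes N: "N \<le> n ^ a"
  shows "real (N choose j) \<le> real n ^ (a * j) / fact j"
proof -
  have "(N choose j) * fact j \<le> N ^ j" by (rule binomial_fact_pow)
  then have "real (N choose j) * fact j \<le> real N ^ j" by (metis of_nat_fact of_nat_le_iff of_nat_mult of_nat_power)
  also have "real N ^ j \<le> (real n ^ a) ^ j" using N by (intro power_mono) (simp_all add: of_nat_power[symmetric] del: of_nat_power)
  also have "\<dots> = real n ^ (a * j)" by (simp add: power_mult)
  finally show ?thesis by (simp add: field_simps)
qed

lemma card_KS_le: "card (KS n j) \<le> n ^ j"
proof (cases "j \<le> n")
  case True then show ?thesis by (simp add: card_KS binomial_le_pow)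
next
  case False then show ?thesis by (simp add: card_KS binomial_eq_0)
qed

lemma subsets_eq_card: "finite S \<Longrightarrow> card {L. L \<subseteq> S \<and> card L = j} = card S choose j"
  by (rule n_subsets)

lemma L_bound:
  assumes n: "1 \<le> n" and k: "1 \<le> k"
  shows "real (card {L. L \<subseteq> KS n k \<and> card L \<le> m \<and> real (card L) \<le> Mb})
    \<le> real (m + 1) * exp (real n) * real n powr ((real k - 1) * Mb)"
proof -
  define P where "P j = {L. L \<subseteq> KS n k \<and> card L = j \<and> real j \<le> Mb}" for j
  have finP: "finite (P j)" for j
    by (rule finite_subset[of _ "Pow (KS n k)"]) (auto simp: P_def finite_KS)
  have sub: "{L. L \<subseteq> KS n k \<and> card L \<le> m \<and> real (card L) \<le> Mb} \<subseteq> (\<Union>j\<in>{..m}. P j)"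
    by (auto simp: P_def)
  have "card {L. L \<subseteq> KS n k \<and> card L \<le> m \<and> real (card L) \<le> Mb} \<le> card (\<Union>j\<in>{..m}. P j)"
    by (rule card_mono[OF _ sub]) (simp add: finP)
  also have "\<dots> \<le> (\<Sum>j\<in>{..m}. card (P j))" by (rule card_UN_le) simp
  finally have 1: "real (card {L. L \<subseteq> KS n k \<and> card L \<le> m \<and> real (card L) \<le> Mb}) \<le> (\<Sum>j\<in>{..m}. real (card (P j)))"
    by (simp add: of_nat_sum[symmetric] del: of_nat_sum)
  have 2: "real (card (P j)) \<le> exp (real n) * real n powr ((real k - 1) * Mb)" for j
  proof (cases "real j \<le> Mb")
    case False
    then have "P j = {}" by (auto simp: P_def)
    then show ?thesis by simp
  next
    case True
    then have "P j = {L. L \<subseteq> KS n k \<and> card L = j}" by (auto simp: P_def)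
    then have "card (P j) = card (KS n k) choose j" using subsets_eq_card[OF finite_KS] by simp
    then have "real (card (P j)) \<le> real n ^ (k * j) / fact j"
      using choose_bound[OF card_KS_le] by simp
    also have "real n ^ (k * j) / fact j = real n ^ ((k - 1) * j) * (real n ^ j / fact j)"
    proof -
      obtain k' where kk: "k = Suc k'" using k by (cases k) auto
      have "k * j = (k - 1) * j + j" unfolding kk by simp
      then have "real n ^ (k * j) = real n ^ ((k - 1) * j) * real n ^ j" by (simp only: power_add)
      then show ?thesis by simp
    qed
    also have "\<dots> \<le> real n powr ((real k - 1) * Mb) * exp (real n)"
    proof (rule mult_mono)
      have "real n powr (real ((k - 1) * j)) = real n ^ ((k - 1) * j)"
        by (rule powr_realpow) (use n in simp)
      then have "real n ^ ((k - 1) * j) = real n powr (real ((k - 1) * j))" by (rule sym)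
      also have "\<dots> \<le> real n powr ((real k - 1) * Mb)"
      proof (rule powr_mono)
        have "real ((k - 1) * j) = (real k - 1) * real j" using k by (simp add: of_nat_diff)
        also have "\<dots> \<le> (real k - 1) * Mb" using k True by (intro mult_left_mono) auto
        finally show "real ((k - 1) * j) \<le> (real k - 1) * Mb" .
        show "1 \<le> real n" using n by simp
      qed
      finally show "real n ^ ((k - 1) * j) \<le> real n powr ((real k - 1) * Mb)" .
      show "real n ^ j / fact j \<le> exp (real n)" by (rule pow_div_fact_le_exp) simp
    qed simp_all
    finally show ?thesis by (simp add: mult.commute)
  qed
  have "(\<Sum>j\<in>{..m}. real (card (P j))) \<le> (\<Sum>j\<in>{..m}. exp (real n) * real n powr ((real k - 1) * Mb))"
    by (rule sum_mono) (rule 2)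
  also have "\<dots> = real (m + 1) * exp (real n) * real n powr ((real k - 1) * Mb)" by simp
  finally show ?thesis using 1 by simp
qed

lemma H_bound:
  assumes n: "1 \<le> n" and k: "1 \<le> k"
  shows "real (card {Hs. Hs \<subseteq> KS n (k - 1) \<and> card Hs * n \<le> Kc})
    \<le> real (Kc + 1) * real n powr ((real k - 1) * real Kc / real n)"
proof -
  define P where "P h = {Hs. Hs \<subseteq> KS n (k - 1) \<and> card Hs = h \<and> h * n \<le> Kc}" for h
  have finP: "finite (P j)" for j
    by (rule finite_subset[of _ "Pow (KS n (k - 1))"]) (auto simp: P_def finite_KS)
  have sub: "{Hs. Hs \<subseteq> KS n (k - 1) \<and> card Hs * n \<le> Kc} \<subseteq> (\<Union>h\<in>{..Kc}. P h)"
  proof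
    fix Hs assume a: "Hs \<in> {Hs. Hs \<subseteq> KS n (k - 1) \<and> card Hs * n \<le> Kc}"
    have c1: "card Hs \<le> card Hs * n" using n by simp
    have c2: "card Hs * n \<le> Kc" using a by simp
    have "card Hs \<le> Kc" by (rule le_trans[OF c1 c2])
    then show "Hs \<in> (\<Union>h\<in>{..Kc}. P h)" using a by (auto simp: P_def)
  qed
  have "card {Hs. Hs \<subseteq> KS n (k - 1) \<and> card Hs * n \<le> Kc} \<le> card (\<Union>h\<in>{..Kc}. P h)"
    by (rule card_mono[OF _ sub]) (simp add: finP)
  also have "\<dots> \<le> (\<Sum>h\<in>{..Kc}. card (P h))" by (rule card_UN_le) simp
  finally have 1: "real (card {Hs. Hs \<subseteq> KS n (k - 1) \<and> card Hs * n \<le> Kc}) \<le> (\<Sum>h\<in>{..Kc}. real (card (P h)))"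
    by (simp add: of_nat_sum[symmetric] del: of_nat_sum)
  have 2: "real (card (P h)) \<le> real n powr ((real k - 1) * real Kc / real n)" for h
  proof (cases "h * n \<le> Kc")
    case False
    then have "P h = {}" by (auto simp: P_def)
    then show ?thesis by simp
  next
    case True
    then have "P h = {Hs. Hs \<subseteq> KS n (k - 1) \<and> card Hs = h}" by (auto simp: P_def)
    then have "card (P h) = card (KS n (k - 1)) choose h" using subsets_eq_card[OF finite_KS] by simp
    then have "real (card (P h)) \<le> real n ^ ((k - 1) * h) / fact h"
      using choose_bound[OF card_KS_le] by simp
    also have "\<dots> \<le> real n ^ ((k - 1) * h) / 1"
      by (rule divide_left_mono) (auto simp: fact_ge_1)
    also have "\<dots> = real n ^ ((k - 1) * h)" by simp
    also have "real n ^ ((k - 1) * h) = real n powr (real ((k - 1) * h))"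
      by (rule sym, rule powr_realpow) (use n in simp)
    also have "\<dots> \<le> real n powr ((real k - 1) * real Kc / real n)"
    proof (intro powr_mono)
      have "real h * real n \<le> real Kc" using True by (simp only: of_nat_mult[symmetric] of_nat_le_iff)
      then have "real h \<le> real Kc / real n" using n by (simp add: field_simps)
      then have "(real k - 1) * real h \<le> (real k - 1) * (real Kc / real n)"
        using k by (intro mult_left_mono) auto
      then show "real ((k - 1) * h) \<le> (real k - 1) * real Kc / real n"
        using k by (simp add: of_nat_diff)
    qed (use n in auto)
    finally show ?thesis .
  qed
  have "(\<Sum>h\<in>{..Kc}. real (card (P h))) \<le> (\<Sum>h\<in>{..Kc}. real n powr ((real k - 1) * real Kc / real n))"
    by (rule sum_mono) (rule 2)
  also have "\<dots> = real (Kc + 1) * real n powr ((real k - 1) * real Kc / real n)" by simp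
  finally show ?thesis using 1 by simp
qed

lemma fam_bound:
  assumes k: "1 \<le> k"
  shows "card {F. F \<subseteq> KS n k \<and> card F = m \<and> real (card (F - cand n k (heavy n k t F))) \<le> Mb
            \<and> card (heavy n k t F) * n \<le> Kc}
    \<le> card {Hs. Hs \<subseteq> KS n (k - 1) \<and> card Hs * n \<le> Kc} * 2 ^ Kc
       * card {L. L \<subseteq> KS n k \<and> card L \<le> m \<and> real (card L) \<le> Mb}"
proof -
  let ?FF = "{F. F \<subseteq> KS n k \<and> card F = m \<and> real (card (F - cand n k (heavy n k t F))) \<le> Mb
            \<and> card (heavy n k t F) * n \<le> Kc}"
  let ?HH = "{Hs. Hs \<subseteq> KS n (k - 1) \<and> card Hs * n \<le> Kc}"
  let ?LL = "{L. L \<subseteq> KS n k \<and> card L \<le> m \<and> real (card L) \<le> Mb}"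
  let ?T = "Sigma ?HH (\<lambda>Hs. Pow (cand n k Hs) \<times> ?LL)"
  let ?g = "\<lambda>F. (heavy n k t F, (F \<inter> cand n k (heavy n k t F), F - cand n k (heavy n k t F)))"
  have finHH: "finite ?HH" by (rule finite_subset[of _ "Pow (KS n (k - 1))"]) (auto simp: finite_KS)
  have finLL: "finite ?LL" by (rule finite_subset[of _ "Pow (KS n k)"]) (auto simp: finite_KS)
  have fincand: "finite (cand n k Hs)" for Hs
    by (rule finite_subset[of _ "KS n k"]) (auto simp: cand_def finite_KS)
  have finT: "finite ?T"
    by (rule finite_SigmaI[OF finHH]) (simp add: fincand finLL)
  have inj: "inj_on ?g ?FF"
  proof (rule inj_onI)
    fix F F' assume "F \<in> ?FF" "F' \<in> ?FF" and e: "?g F = ?g F'"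
    from e have h: "heavy n k t F = heavy n k t F'" by (rule iffD1[OF prod.inject, THEN conjunct1])
    from e have e2: "(F \<inter> cand n k (heavy n k t F), F - cand n k (heavy n k t F)) =
        (F' \<inter> cand n k (heavy n k t F'), F' - cand n k (heavy n k t F'))"
      by (rule iffD1[OF prod.inject, THEN conjunct2])
    have a1: "F \<inter> cand n k (heavy n k t F) = F' \<inter> cand n k (heavy n k t F')"
      using e2 by (rule iffD1[OF prod.inject, THEN conjunct1])
    have a2: "F - cand n k (heavy n k t F) = F' - cand n k (heavy n k t F')"
      using e2 by (rule iffD1[OF prod.inject, THEN conjunct2])
    have "F = (F \<inter> cand n k (heavy n k t F)) \<union> (F - cand n k (heavy n k t F))" by blast
    also have "\<dots> = (F' \<inter> cand n k (heavy n k t F')) \<union> (F' - cand n k (heavy n k t F'))" using a1 a2 by simp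
    also have "\<dots> = F'" by blast
    finally show "F = F'" .
  qed
  have sub: "?g ` ?FF \<subseteq> ?T"
  proof (rule image_subsetI)
    fix F assume F: "F \<in> ?FF"
    then have FK: "F \<subseteq> KS n k" and cF: "card F = m" and Mb: "real (card (F - cand n k (heavy n k t F))) \<le> Mb"
      and hK: "card (heavy n k t F) * n \<le> Kc" by simp_all
    have finF: "finite F" by (rule finite_subset[OF FK finite_KS])
    have "heavy n k t F \<subseteq> KS n (k - 1)" by (auto simp: heavy_def)
    then have 1: "heavy n k t F \<in> ?HH" using hK by simp
    have 2: "F \<inter> cand n k (heavy n k t F) \<in> Pow (cand n k (heavy n k t F))" by simp
    have "card (F - cand n k (heavy n k t F)) \<le> card F" by (rule card_mono[OF finF]) blast
    then have 3: "F - cand n k (heavy n k t F) \<in> ?LL" using FK cF Mb by auto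
    show "?g F \<in> ?T" using 1 2 3 by simp
  qed
  have "card ?FF = card (?g ` ?FF)" by (rule card_image[OF inj, symmetric])
  also have "\<dots> \<le> card ?T" by (rule card_mono[OF finT sub])
  also have "card ?T = (\<Sum>Hs\<in>?HH. card (Pow (cand n k Hs) \<times> ?LL))"
    by (rule card_SigmaI[OF finHH]) (simp add: fincand finLL)
  also have "\<dots> = (\<Sum>Hs\<in>?HH. 2 ^ card (cand n k Hs) * card ?LL)"
    by (rule sum.cong[OF refl]) (simp add: card_cartesian_product card_Pow fincand)
  also have "\<dots> \<le> (\<Sum>Hs\<in>?HH. 2 ^ Kc * card ?LL)"
  proof (rule sum_mono)
    fix Hs assume Hs: "Hs \<in> ?HH"
    have "card (cand n k Hs) \<le> card Hs * n" by (rule cand_card) (use Hs k in auto)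
    also have "\<dots> \<le> Kc" using Hs by simp
    finally have "card (cand n k Hs) \<le> Kc" .
    then have "(2::nat) ^ card (cand n k Hs) \<le> 2 ^ Kc" by (rule power_increasing) simp
    then show "2 ^ card (cand n k Hs) * card ?LL \<le> 2 ^ Kc * card ?LL" by (rule mult_right_mono) simp
  qed
  also have "\<dots> = card ?HH * 2 ^ Kc * card ?LL" by simp
  finally show ?thesis .
qed

lemma npow:
  assumes n: "1 \<le> n" and a: "0 \<le> a"
  shows "real n powr (a / real n) \<le> 2 powr a"
proof -
  have n0: "0 < real n" using n by simp
  have "real n \<le> 2 ^ n" using less_exp[of n] by (metis less_imp_le of_nat_le_iff of_nat_numeral of_nat_power)
  also have "(2::real) ^ n = 2 powr real n" by (rule powr_realpow[symmetric]) simp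
  finally have 1: "real n \<le> 2 powr real n" .
  have "real n powr (1 / real n) \<le> (2 powr real n) powr (1 / real n)"
    by (rule powr_mono2) (use 1 n0 in auto)
  also have "\<dots> = 2" using n0 by (simp add: powr_powr)
  finally have 2: "real n powr (1 / real n) \<le> 2" .
  have "real n powr (a / real n) = (real n powr (1 / real n)) powr a" by (simp add: powr_powr)
  also have "\<dots> \<le> 2 powr a" by (rule powr_mono2) (use a 2 in auto)
  finally show ?thesis .
qed

lemma key_ineq:
  fixes K N \<theta> :: real
  assumes K: "1 \<le> K" and N: "10 * K ^ 2 \<le> N" and th1: "1 / (2 * K) \<le> \<theta>" and th2: "\<theta> \<le> 1"
  shows "(1 - \<theta>) * N \<le> ((1 - \<theta> * (1 - 1 / (2 * K ^ 2))) + 2 * K / N) * (N - K - K * (N / (8 * K ^ 4)))"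
proof -
  define e where "e = 1 - \<theta> * (1 - 1 / (2 * K ^ 2))"
  have K2: "1 \<le> K ^ 2" using K by (simp add: one_le_power)
  have Npos: "0 < N" using N K2 by linarith
  have "0 < 1 / (2 * K)" using K by simp
  then have th0: "0 \<le> \<theta>" using th1 by linarith
  have q0: "0 \<le> 1 / (2 * K ^ 2)" using K2 by simp
  have q1: "1 / (2 * K ^ 2) \<le> 1" using K2 by (simp add: divide_le_eq)
  note q = q0 q1
  have "0 \<le> \<theta> * (1 - 1 / (2 * K ^ 2))" using th0 q1 by simp
  then have e1: "e \<le> 1" unfolding e_def by linarith
  have "\<theta> * (1 - 1 / (2 * K ^ 2)) \<le> 1" by (rule mult_le_one) (use th2 q0 q1 in auto)
  then have e0: "0 \<le> e" unfolding e_def by linarith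
  have p3: "K ^ 3 = K * K ^ 2" and p4: "K ^ 4 = K * K ^ 3" by (simp_all add: eval_nat_numeral)
  have Kp: "0 < K" using K by simp
  have t: "K * (N / (8 * K ^ 4)) = N / (8 * K ^ 3)" unfolding p4 using Kp by simp
  define P where "P = N - K - N / (8 * K ^ 3)"
  have h1: "\<theta> * N / (2 * K ^ 2) \<ge> N / (4 * K ^ 3)"
  proof -
    have "N / (4 * K ^ 3) = (1 / (2 * K)) * N / (2 * K ^ 2)" unfolding p3 using Kp by simp
    also have "\<dots> \<le> \<theta> * N / (2 * K ^ 2)" using th1 Npos K2
      by (intro divide_right_mono mult_right_mono) auto
    finally show ?thesis by simp
  qed
  have h2: "2 * K / N * P = 2 * K - 2 * K ^ 2 / N - 1 / (4 * K ^ 2)"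
    unfolding P_def using Kp Npos K2 unfolding p3 by (simp add: field_simps power2_eq_square)
  have h3: "2 * K ^ 2 / N \<le> 1 / 5" using N Npos by (simp add: field_simps)
  have h4: "1 / (4 * K ^ 2) \<le> 1 / 4" using K2 by (simp add: divide_le_eq)
  have n8: "0 \<le> N / (8 * K ^ 3)" using Npos K by simp
  have h5: "e * P \<ge> e * N - K - N / (8 * K ^ 3)"
  proof -
    have "e * K \<le> K" using e1 K by (simp add: mult_left_le_one_le)
    moreover have "e * (N / (8 * K ^ 3)) \<le> N / (8 * K ^ 3)" by (rule mult_left_le_one_le[OF n8 e0 e1])
    ultimately show ?thesis unfolding P_def by (simp add: algebra_simps)
  qed
  have h6: "e * N = (1 - \<theta>) * N + \<theta> * N / (2 * K ^ 2)" unfolding e_def by (simp add: algebra_simps)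
  have "(e + 2 * K / N) * P = e * P + 2 * K / N * P" by (simp add: algebra_simps)
  have "(1 - \<theta>) * N \<le> (e + 2 * K / N) * P"
  proof -
    have "N / (8 * K ^ 3) \<le> N / (4 * K ^ 3)" using Npos Kp by (intro divide_left_mono) auto
    then show ?thesis using h1 h2 h3 h4 h5 h6 K \<open>(e + 2 * K / N) * P = e * P + 2 * K / N * P\<close>
      by linarith
  qed
  then show ?thesis unfolding e_def P_def t .
qed

theorem proposition3p1:
  fixes k :: nat and r :: nat and R :: "'r::{finite, ab_group_add} itself"
  assumes "k \<ge> 1"
    and "card (UNIV :: 'r set) = r"
  shows "\<exists>c1::real. \<forall>n m (\<theta>::real).
    real n \<ge> 10 * real k ^ 2 \<longrightarrow> real m \<ge> real n / (2 * real k) \<longrightarrow>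
    1 / (2 * real k) \<le> \<theta> \<longrightarrow> \<theta> \<le> 1 \<longrightarrow>
    real (gcount R n k m \<theta>)
      \<le> (c1 * real n powr ((real k - 1) * (1 - \<theta> * (1 - 1 / (2 * real k ^ 2))))) ^ m"
proof -
  have k1: "1 \<le> k" using assms(1) .
  define c1 :: real where "c1 = real r ^ (k ^ k) * 2 ^ (8 * k ^ 5) * 2 ^ (8 * k ^ 6) * 2 ^ (8 * k ^ 5) * 2
      * exp (2 * real k) * 2 ^ (2 * k ^ 2)"
  show ?thesis
  proof (rule exI[of _ c1], intro allI impI)
    fix n m :: nat and \<theta> :: real
    assume hn: "10 * real k ^ 2 \<le> real n" and hm: "real n / (2 * real k) \<le> real m"
      and ht1: "1 / (2 * real k) \<le> \<theta>" and ht2: "\<theta> \<le> 1"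
    define e where "e = 1 - \<theta> * (1 - 1 / (2 * real k ^ 2))"
    define t where "t = real n / (8 * real k ^ 4)"
    define Kc where "Kc = 8 * k ^ 5 * m"
    define Mb where "Mb = e * real m + 2 * real k * real m / real n"
    define P where "P = real n - real k - real k * t"
    let ?S = "{\<phi> \<in> (Gset n k :: (nat list \<Rightarrow> 'r) set). card (csupp n k \<phi>) = m
        \<and> real (cbnd n k \<phi>) = (1 - \<theta>) * real m * real n}"
    define FF where "FF = {F. F \<subseteq> KS n k \<and> card F = m \<and> real (card (F - cand n k (heavy n k t F))) \<le> Mb
            \<and> card (heavy n k t F) * n \<le> Kc}"
    have K1: "1 \<le> real k" using k1 by simp
    have Kp: "0 < real k" using k1 by simp
    have K2: "1 \<le> real k ^ 2" using K1 by (simp add: one_le_power)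
    have N1: "1 \<le> real n" using hn K2 by linarith
    have n1: "1 \<le> n" using N1 by simp
    have Np: "0 < real n" using N1 by simp
    have NK: "real n \<le> 2 * real k * real m" using hm Kp by (simp add: field_simps)
    have m1: "1 \<le> m"
    proof -
      have "0 < real n / (2 * real k)" using Np Kp by simp
      then have "0 < real m" using hm by linarith
      then show ?thesis by simp
    qed
    have t0: "0 \<le> t" unfolding t_def using Np Kp by simp
    have key: "(1 - \<theta>) * real n \<le> (e + 2 * real k / real n) * P"
      using key_ineq[OF K1 hn ht1 ht2] unfolding e_def P_def t_def .
    have Ppos: "0 < P"
    proof -
      have p3: "real k ^ 4 = real k * real k ^ 3" by (simp add: eval_nat_numeral)
      have "real k * t = real n / (8 * real k ^ 3)" unfolding t_def p3 using Kp by simp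
      also have "\<dots> \<le> real n / 8"
        using Np K1 by (intro divide_left_mono) (auto simp: one_le_power)
      finally have a: "real k * t \<le> real n / 8" .
      have "real k \<le> real k ^ 2" using K1 by (simp add: power2_eq_square)
      then have b: "real k \<le> real n / 10" using hn by linarith
      show ?thesis unfolding P_def using a b Np by linarith
    qed
    have mem: "csupp n k \<phi> \<in> FF" if "\<phi> \<in> ?S" for \<phi>
    proof -
      let ?F = "csupp n k \<phi>"
      let ?H = "heavy n k t ?F"
      let ?FL = "?F - cand n k ?H"
      have coch: "\<phi> \<in> cochains n k" and cF: "card ?F = m"
        and cb: "real (cbnd n k \<phi>) = (1 - \<theta>) * real m * real n"
        using that by (auto simp: Gset_def)
      have FK: "?F \<subseteq> KS n k" by (rule csupp_KS)
      have finF: "finite ?F" by (rule finite_csupp)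
      have hc: "real (card ?H) * t \<le> real (k * card ?F)" by (rule heavy_count[OF FK k1 t0])
      have hK: "card ?H * n \<le> Kc"
      proof -
        have p4: "real k ^ 5 = real k ^ 4 * real k" by (simp add: eval_nat_numeral)
        have "real (card ?H) * real n = (real (card ?H) * t) * (8 * real k ^ 4)"
          unfolding t_def using Kp by simp
        also have "\<dots> \<le> real (k * card ?F) * (8 * real k ^ 4)"
          by (rule mult_right_mono[OF hc]) simp
        also have "\<dots> = real Kc" unfolding Kc_def cF p4 by (simp add: p4 algebra_simps)
        finally have "real (card ?H * n) \<le> real Kc" by simp
        then show ?thesis by (simp only: of_nat_le_iff)
      qed
      have goodfin: "finite (good n ?F \<sigma>)" for \<sigma>
        by (rule finite_subset[of _ "{1..n}"]) (auto simp: good_def)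
      have lg: "P \<le> real (card (good n ?F \<sigma>))" if s: "\<sigma> \<in> ?FL" for \<sigma>
      proof -
        have sF: "\<sigma> \<in> ?F" using s by simp
        have sK: "\<sigma> \<in> KS n k" using FK sF by blast
        have light: "\<forall>B. B \<subseteq> \<sigma> \<longrightarrow> card B = k - 1 \<longrightarrow> real (sdeg ?F B) < t"
        proof (intro allI impI)
          fix B assume B: "B \<subseteq> \<sigma>" "card B = k - 1"
          show "real (sdeg ?F B) < t"
          proof (rule ccontr)
            assume "\<not> real (sdeg ?F B) < t"
            then have tle: "t \<le> real (sdeg ?F B)" by simp
            have "B \<in> KS n (k - 1)" using B sK by (auto simp: KS_def)
            then have "B \<in> ?H" using tle by (simp add: heavy_def)
            then have "\<sigma> \<in> cand n k ?H" using sK B(1) by (auto simp: cand_def)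
            then show False using s by simp
          qed
        qed
        have "real n \<le> real (card (good n ?F \<sigma>)) + real k + real k * t"
          by (rule light_good[OF FK sF k1 t0 light])
        then show ?thesis unfolding P_def by simp
      qed
      have finFL: "finite ?FL" using finF by simp
      have "real (card ?FL) * P = (\<Sum>\<sigma>\<in>?FL. P)" by simp
      also have "\<dots> \<le> (\<Sum>\<sigma>\<in>?FL. real (card (good n ?F \<sigma>)))" by (rule sum_mono) (rule lg)
      also have "\<dots> = real (\<Sum>\<sigma>\<in>?FL. card (good n ?F \<sigma>))" by simp
      also have "(\<Sum>\<sigma>\<in>?FL. card (good n ?F \<sigma>)) = card (Sigma ?FL (good n ?F))"
        by (rule card_SigmaI[symmetric, OF finFL]) (simp add: goodfin)
      also have "card (Sigma ?FL (good n ?F)) \<le> cbnd n k \<phi>"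
        by (rule light_to_cbnd) blast
      finally have "real (card ?FL) * P \<le> real (cbnd n k \<phi>)" by simp
      also have "\<dots> = real m * ((1 - \<theta>) * real n)" using cb by simp
      also have "\<dots> \<le> real m * ((e + 2 * real k / real n) * P)"
        by (rule mult_left_mono[OF key]) simp
      also have "\<dots> = Mb * P" unfolding Mb_def by (simp add: algebra_simps)
      finally have "real (card ?FL) * P \<le> Mb * P" .
      then have FLb: "real (card ?FL) \<le> Mb" using Ppos by simp
      show ?thesis unfolding FF_def using FK cF FLb hK by blast
    qed
    have finFF: "finite FF"
      by (rule finite_subset[of _ "Pow (KS n k)"]) (auto simp: FF_def finite_KS)
    have FFp: "\<forall>F\<in>FF. F \<subseteq> KS n k \<and> card F = m" by (simp add: FF_def)
    have SS: "?S \<subseteq> {\<phi>. \<phi> \<in> cochains n k \<and> csupp n k \<phi> \<in> FF}"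
      using mem by (auto simp: Gset_def)
    have c1: "card ?S \<le> card FF * card (UNIV :: 'r set) ^ (m * k ^ k)"
      by (rule phi_count[OF finFF FFp SS])
    have c2: "card FF \<le> card {Hs. Hs \<subseteq> KS n (k - 1) \<and> card Hs * n \<le> Kc} * 2 ^ Kc
       * card {L. L \<subseteq> KS n k \<and> card L \<le> m \<and> real (card L) \<le> Mb}"
      unfolding FF_def by (rule fam_bound[OF k1])
    have c3: "real (card {Hs. Hs \<subseteq> KS n (k - 1) \<and> card Hs * n \<le> Kc})
        \<le> real (Kc + 1) * real n powr ((real k - 1) * real Kc / real n)"
      by (rule H_bound[OF n1 k1])
    have c4: "real (card {L. L \<subseteq> KS n k \<and> card L \<le> m \<and> real (card L) \<le> Mb})
        \<le> real (m + 1) * exp (real n) * real n powr ((real k - 1) * Mb)"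
      by (rule L_bound[OF n1 k1])
    have gc: "gcount R n k m \<theta> = card ?S" by (simp add: gcount_def)
    let ?y = "real n powr ((real k - 1) * e)"
    have Km: "0 \<le> real k - 1" using K1 by simp
    have b1: "real (Kc + 1) \<le> (2 ^ (8 * k ^ 5)) ^ m"
    proof -
      have "Kc + 1 \<le> 2 ^ Kc" using Suc_leI[OF less_exp[of Kc]] by simp
      then have "real (Kc + 1) \<le> real (2 ^ Kc)" by (simp only: of_nat_le_iff)
      also have "real (2 ^ Kc) = (2 ^ (8 * k ^ 5)) ^ m" unfolding Kc_def by (simp add: power_mult)
      finally show ?thesis .
    qed
    have b2: "real n powr ((real k - 1) * real Kc / real n) \<le> (2 ^ (8 * k ^ 6)) ^ m"
    proof -
      have "real n powr ((real k - 1) * real Kc / real n) \<le> 2 powr ((real k - 1) * real Kc)"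
        by (rule npow[OF n1]) (use Km in simp)
      also have "\<dots> \<le> 2 powr (real (8 * k ^ 6 * m))"
      proof (rule powr_mono)
        have p6: "real k ^ 6 = real k * real k ^ 5" by (simp add: eval_nat_numeral)
        have "(real k - 1) * real Kc \<le> real k * real Kc" by (simp add: algebra_simps)
        also have "\<dots> = real (8 * k ^ 6 * m)" unfolding Kc_def by (simp add: p6 algebra_simps)
        finally show "(real k - 1) * real Kc \<le> real (8 * k ^ 6 * m)" .
      qed simp
      also have "\<dots> = 2 ^ (8 * k ^ 6 * m)" by (rule powr_realpow) simp
      also have "\<dots> = (2 ^ (8 * k ^ 6)) ^ m" by (simp add: power_mult)
      finally show ?thesis .
    qed
    have b3: "(2::real) ^ Kc = (2 ^ (8 * k ^ 5)) ^ m" unfolding Kc_def by (simp add: power_mult)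
    have b4: "real (m + 1) \<le> 2 ^ m"
    proof -
      have "m + 1 \<le> 2 ^ m" using Suc_leI[OF less_exp[of m]] by simp
      then have "real (m + 1) \<le> real (2 ^ m)" by (simp only: of_nat_le_iff)
      then show ?thesis by simp
    qed
    have b5: "exp (real n) \<le> exp (2 * real k) ^ m"
    proof -
      have "exp (real n) \<le> exp (real m * (2 * real k))" using NK by (simp add: algebra_simps)
      also have "\<dots> = exp (2 * real k) ^ m" by (rule exp_of_nat_mult)
      finally show ?thesis .
    qed
    have b6: "real n powr ((real k - 1) * Mb) \<le> (2 ^ (2 * k ^ 2)) ^ m * ?y ^ m"
    proof -
      have "(real k - 1) * Mb = real m * ((real k - 1) * e) + (real k - 1) * (2 * real k * real m) / real n"
        unfolding Mb_def by (simp add: algebra_simps)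
      then have "real n powr ((real k - 1) * Mb) = real n powr (real m * ((real k - 1) * e))
          * real n powr ((real k - 1) * (2 * real k * real m) / real n)"
        by (simp add: powr_add)
      also have "real n powr (real m * ((real k - 1) * e)) = ?y ^ m"
        by (rule powr_power[symmetric]) (use Np in simp)
      also have "real n powr ((real k - 1) * (2 * real k * real m) / real n) \<le> (2 ^ (2 * k ^ 2)) ^ m"
      proof -
        have "real n powr ((real k - 1) * (2 * real k * real m) / real n) \<le> 2 powr ((real k - 1) * (2 * real k * real m))"
          by (rule npow[OF n1]) (use Km in simp)
        also have "\<dots> \<le> 2 powr (real (2 * k ^ 2 * m))"
        proof (rule powr_mono)
          have "(real k - 1) * (2 * real k * real m) \<le> real k * (2 * real k * real m)"
            by (simp add: algebra_simps)
          also have "\<dots> = real (2 * k ^ 2 * m)" by (simp add: power2_eq_square algebra_simps)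
          finally show "(real k - 1) * (2 * real k * real m) \<le> real (2 * k ^ 2 * m)" .
        qed simp
        also have "\<dots> = 2 ^ (2 * k ^ 2 * m)" by (rule powr_realpow) simp
        also have "\<dots> = (2 ^ (2 * k ^ 2)) ^ m" by (simp add: power_mult)
        finally show ?thesis .
      qed
      finally show ?thesis by (simp add: mult.commute mult_right_mono)
    qed
    define X1 :: real where "X1 = (2 ^ (8 * k ^ 5)) ^ m * (2 ^ (8 * k ^ 6)) ^ m"
    define X2 :: real where "X2 = 2 ^ m * exp (2 * real k) ^ m * ((2 ^ (2 * k ^ 2)) ^ m * ?y ^ m)"
    have HH: "real (card {Hs. Hs \<subseteq> KS n (k - 1) \<and> card Hs * n \<le> Kc}) \<le> X1"
    proof -
      have "real (Kc + 1) * real n powr ((real k - 1) * real Kc / real n) \<le> X1"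
        unfolding X1_def by (rule mult_mono[OF b1 b2]) simp_all
      then show ?thesis using c3 by linarith
    qed
    have LL: "real (card {L. L \<subseteq> KS n k \<and> card L \<le> m \<and> real (card L) \<le> Mb}) \<le> X2"
    proof -
      have "real (m + 1) * exp (real n) \<le> 2 ^ m * exp (2 * real k) ^ m"
        by (rule mult_mono[OF b4 b5]) simp_all
      then have "real (m + 1) * exp (real n) * real n powr ((real k - 1) * Mb) \<le> X2"
        unfolding X2_def by (rule mult_mono[OF _ b6]) simp_all
      then show ?thesis using c4 by linarith
    qed
    have X1p: "0 \<le> X1" and X2p: "0 \<le> X2" unfolding X1_def X2_def by simp_all
    have "real (card FF) \<le> real (card {Hs. Hs \<subseteq> KS n (k - 1) \<and> card Hs * n \<le> Kc}) * 2 ^ Kc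
       * real (card {L. L \<subseteq> KS n k \<and> card L \<le> m \<and> real (card L) \<le> Mb})"
    proof -
      have "real (card FF) \<le> real (card {Hs. Hs \<subseteq> KS n (k - 1) \<and> card Hs * n \<le> Kc} * 2 ^ Kc
       * card {L. L \<subseteq> KS n k \<and> card L \<le> m \<and> real (card L) \<le> Mb})" using c2 by (simp only: of_nat_le_iff)
      then show ?thesis by (simp only: of_nat_mult of_nat_power of_nat_numeral)
    qed
    also have "\<dots> \<le> X1 * 2 ^ Kc * X2"
      by (intro mult_mono HH LL order_refl) (simp_all add: X1p)
    finally have FFb: "real (card FF) \<le> X1 * (2 ^ (8 * k ^ 5)) ^ m * X2" unfolding b3 .
    have "real (gcount R n k m \<theta>) \<le> real (card FF) * real r ^ (m * k ^ k)"
    proof -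
      have "real (card ?S) \<le> real (card FF * card (UNIV :: 'r set) ^ (m * k ^ k))" using c1 by (simp only: of_nat_le_iff)
      then show ?thesis unfolding gc assms(2) by (simp only: of_nat_mult of_nat_power)
    qed
    also have "\<dots> \<le> X1 * (2 ^ (8 * k ^ 5)) ^ m * X2 * real r ^ (m * k ^ k)"
      by (rule mult_right_mono[OF FFb]) simp
    also have "\<dots> = (c1 * ?y) ^ m"
    proof -
      have r: "real r ^ (m * k ^ k) = (real r ^ (k ^ k)) ^ m" by (metis power_mult mult.commute)
      have gen: "\<And>(R::real) A B E C y. A ^ m * B ^ m * A ^ m * (2 ^ m * E ^ m * (C ^ m * y ^ m)) * R ^ m
          = (R * A * B * A * 2 * E * C * y) ^ m"
        by (simp add: power_mult_distrib ac_simps)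
      show ?thesis unfolding X1_def X2_def c1_def r by (rule gen)
    qed
    finally show "real (gcount R n k m \<theta>) \<le> (c1 * real n powr ((real k - 1) * (1 - \<theta> * (1 - 1 / (2 * real k ^ 2))))) ^ m"
      unfolding e_def .
  qed
qed

end
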